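(* Let $S\subset\mathbb{R}^n$ be a smooth cylinder hypersurface with axis vector $e$, and consider rolling of the particle on $S$ under the constant force $f=(0,-mge)$. A path $q(t)=(A(t),a(t))\in SO(n)\times S$ that solves the constrained Newton's equation for this rolling motion is the solution of an initial value problem for the system $$\dot a=rU\nu_a,\qquad \dot A=UA,\qquad \dot U=-\frac{1}{(1+\gamma^2)r}\big(r^2U\mathbb{S}_aU\nu_a-ge\big)\wedge\nu_a,$$ where $U=\dot AA^{-1}\in\mathfrak{so}(n)$.
   Context: The particle is a ball of radius $r>0$ with rotationally symmetric mass distribution of total mass $m$ and second-moment matrix per unit mass $\lambda I$, $\lambda=(r\gamma)^2/2$, $\gamma>0$. $S$ is the hypersurface of positions of the center of the particle, $\nu_a$ its unit normal at $a$ (pointing into the region containing the centers), and $\mathbb{S}_a$ its shape operator: the symmetric map of $T_aS$ with $\mathbb{S}_av=-D_v\nu$ (directional derivative). For $a,b\in\mathbb{R}^n$, $a\wedge b\in\mathfrak{so}(n)$ is $(a\wedge b)x=(a\cdot x)b-(b\cdot x)a$. On $M=SO(n)\times S$ use the kinetic energy metric $\langle(U_\xi A,u_\xi),(U_\eta A,u_\eta)\rangle=m\{\tfrac{(r\gamma)^2}{2}\mathrm{Tr}(U_\xi U_\eta^\dagger)+u_\xi\cdot u_\eta\}$, with Levi-Civita connection $\nabla$; for $\dot q=(UA,u)$ one has $\frac{\nabla\dot q}{dt}=(\dot UA,\frac{Du}{dt})$, $D$ the Levi-Civita connection of $S$. The no-slip space at $q=(A,a)$ is $\mathfrak{S}_q=\{(UA,u):u=rU\nu_a\}$,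 and $\mathfrak{S}^\perp_q$ denotes its orthogonal complement inside $T_qM$ (with respect to the kinetic energy metric). A path satisfies the constrained Newton's equation if $\dot q(t)\in\mathfrak{S}_{q(t)}$ for all $t$ and $\frac{\nabla\dot q}{dt}=m^{-1}f+N$ for some $N(t)\in\mathfrak{S}^\perp_{q(t)}$. *)

theory Defs
  imports "HOL-Analysis.Analysis"
begin

fun iter_dd :: "'a::real_normed_vector list \<Rightarrow> ('a \<Rightarrow> 'b::real_normed_vector) \<Rightarrow> 'a \<Rightarrow> 'b" where
  "iter_dd [] f = f"
| "iter_dd (v # vs) f = (\<lambda>x. frechet_derivative (iter_dd vs f) (at x) v)"

definition smooth_fun :: "('a::real_normed_vector \<Rightarrow> 'b::real_normed_vector) \<Rightarrow> bool" where
  "smooth_fun f \<longleftrightarrow> (\<forall>vs x. iter_dd vs f differentiable (at x))"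

definition SOn :: "(real^'n^'n) set" where
  "SOn = {A. orthogonal_matrix A \<and> det A = 1}"

definition son :: "(real^'n^'n) set" where
  "son = {U. transpose U = - U}"

text \<open>Wedge: (a \<and> b) x = (a \<bullet> x) b - (b \<bullet> x) a, as a matrix.\<close>
definition wedge :: "real^'n \<Rightarrow> real^'n \<Rightarrow> real^'n^'n" where
  "wedge a b = (\<chi> i j. b $ i * a $ j - a $ i * b $ j)"

text \<open>Smooth hypersurface S with unit normal field nu: S is a regular level set
  of a smooth function phi and nu is the normalised gradient of phi
  (defined on all of R^n, so that its derivative at points of S makes sense).\<close>
definition smooth_hypersurface :: "(real^'n) set \<Rightarrow> (real^'n \<Rightarrow> real^'n) \<Rightarrow> bool" where
  "smooth_hypersurface S \<nu> \<longleftrightarrow>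
     (\<exists>\<phi> G. smooth_fun \<phi> \<and> S = {x. \<phi> x = 0} \<and>
        (\<forall>x. (\<phi> has_derivative (\<lambda>v. G x \<bullet> v)) (at x)) \<and>
        (\<forall>x\<in>S. G x \<noteq> 0) \<and> (\<forall>x. \<nu> x = G x /\<^sub>R norm (G x)))"

definition cylinder_hypersurface :: "(real^'n) set \<Rightarrow> (real^'n \<Rightarrow> real^'n) \<Rightarrow> real^'n \<Rightarrow> bool" where
  "cylinder_hypersurface S \<nu> e \<longleftrightarrow> smooth_hypersurface S \<nu> \<and> norm e = 1 \<and>
     (\<forall>a\<in>S. \<forall>s::real. a + s *\<^sub>R e \<in> S)"

definition tangent_S :: "(real^'n \<Rightarrow> real^'n) \<Rightarrow> real^'n \<Rightarrow> (real^'n) set" where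
  "tangent_S \<nu> a = {v. v \<bullet> \<nu> a = 0}"

definition shape_op :: "(real^'n \<Rightarrow> real^'n) \<Rightarrow> real^'n \<Rightarrow> real^'n \<Rightarrow> real^'n" where
  "shape_op \<nu> a v = - frechet_derivative \<nu> (at a) v"

text \<open>Tangent space of M = SO(n) x S at q = (A,a): pairs (U A, u), U in so(n), u in T_a S.\<close>
definition tangent_M :: "(real^'n \<Rightarrow> real^'n) \<Rightarrow> real^'n^'n \<Rightarrow> real^'n \<Rightarrow> ((real^'n^'n) \<times> (real^'n)) set" where
  "tangent_M \<nu> A a = {(X, u). X ** matrix_inv A \<in> son \<and> u \<in> tangent_S \<nu> a}"

definition kin_metric :: "real \<Rightarrow> real \<Rightarrow> real \<Rightarrow> real^'n^'n \<Rightarrow>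
    ((real^'n^'n) \<times> (real^'n)) \<Rightarrow> ((real^'n^'n) \<times> (real^'n)) \<Rightarrow> real" where
  "kin_metric m r \<gamma> A \<xi> \<eta> =
     m * ((r * \<gamma>)\<^sup>2 / 2 * trace ((fst \<xi> ** matrix_inv A) ** transpose (fst \<eta> ** matrix_inv A))
          + snd \<xi> \<bullet> snd \<eta>)"

definition noslip :: "real \<Rightarrow> (real^'n \<Rightarrow> real^'n) \<Rightarrow> real^'n^'n \<Rightarrow> real^'n \<Rightarrow> ((real^'n^'n) \<times> (real^'n)) set" where
  "noslip r \<nu> A a = {(X, u) \<in> tangent_M \<nu> A a. u = r *\<^sub>R ((X ** matrix_inv A) *v \<nu> a)}"

definition noslip_perp :: "real \<Rightarrow> real \<Rightarrow> real \<Rightarrow> (real^'n \<Rightarrow> real^'n) \<Rightarrow> real^'n^'n \<Rightarrow> real^'n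
    \<Rightarrow> ((real^'n^'n) \<times> (real^'n)) set" where
  "noslip_perp m r \<gamma> \<nu> A a = {w \<in> tangent_M \<nu> A a. \<forall>z \<in> noslip r \<nu> A a. kin_metric m r \<gamma> A w z = 0}"

text \<open>Levi-Civita covariant derivative on S of the velocity u of a curve in S with
  ordinary derivative u': the tangential projection of u'.\<close>
definition cov_S :: "(real^'n \<Rightarrow> real^'n) \<Rightarrow> real^'n \<Rightarrow> real^'n \<Rightarrow> real^'n" where
  "cov_S \<nu> a u' = u' - (u' \<bullet> \<nu> a) *\<^sub>R \<nu> a"

end

theory Submission
  imports Defs
begin

lemma SOn_inv:
  assumes "A \<in> SOn"
  shows "A ** matrix_inv A = mat 1" "matrix_inv A ** A = mat 1"
proof -
  have ex: "\<exists>A'. A ** A' = mat 1 \<and> A' ** A = mat 1"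
    using assms by (auto simp: SOn_def orthogonal_matrix_def)
  show "A ** matrix_inv A = mat 1" "matrix_inv A ** A = mat 1"
    using someI_ex[OF ex] unfolding matrix_inv_def by auto
qed

lemma skew_quad:
  fixes V :: "real^'n^'n"
  assumes "transpose V = - V"
  shows "x \<bullet> (V *v x) = 0"
proof -
  have "x \<bullet> (V *v x) = (x v* V) \<bullet> x" by (simp add: dot_lmul_matrix)
  also have "x v* V = transpose V *v x" by simp
  also have "\<dots> = - (V *v x)" using assms
    by (simp add: matrix_vector_mult_def vec_eq_iff sum_negf)
  finally show ?thesis by (simp add: inner_commute)
qed

lemma wedge_add: "wedge (a + b) c = wedge a c + wedge b c"
  by (simp add: wedge_def vec_eq_iff algebra_simps)
lemma wedge_diff: "wedge (a - b) c = wedge a c - wedge b c"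
  by (simp add: wedge_def vec_eq_iff algebra_simps)
lemma wedge_scale: "wedge (k *\<^sub>R a) c = k *\<^sub>R wedge a c"
  by (simp add: wedge_def vec_eq_iff algebra_simps)
lemma wedge_self: "wedge a a = 0"
  by (simp add: wedge_def vec_eq_iff algebra_simps)

lemma wedge_mv: "wedge Y v *v v = (Y \<bullet> v) *\<^sub>R v - (v \<bullet> v) *\<^sub>R Y"
  by (simp add: vec_eq_iff matrix_vector_mult_def wedge_def inner_vec_def
      sum_subtractf sum_distrib_left sum_distrib_right algebra_simps)

lemma sum2_delta: "(\<Sum>a\<in>(UNIV::'n::finite set). \<Sum>b\<in>(UNIV::'n set). if a = i \<and> b = j then (c::real) else 0) = c"
proof -
  have "(\<Sum>b\<in>(UNIV::'n set). if a = i \<and> b = j then (c::real) else 0) = (if a = i then c else 0)" for a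
  proof (cases "a = i")
    case True
    then show ?thesis by (simp add: sum.delta)
  next
    case False
    then show ?thesis by simp
  qed
  then show ?thesis by (simp add: sum.delta)
qed

definition Eij :: "'n \<Rightarrow> 'n \<Rightarrow> real^'n^'n" where
  "Eij i j = (\<chi> k l. (if k = i \<and> l = j then 1 else 0) - (if k = j \<and> l = i then 1 else 0))"
lemma Eij_pt: "Eij i j $ k $ l = (if k = i \<and> l = j then 1 else 0) - (if k = j \<and> l = i then (1::real) else 0)"
  by (simp add: Eij_def)
lemma transpose_pt: "transpose M $ k $ l = M $ l $ k"
  by (simp add: transpose_def)
lemma Eij_skew: "transpose (Eij i j) = - Eij i j"
proof -
  have "transpose (Eij i j) $ k $ l = (- Eij i j) $ k $ l" for k l
    unfolding transpose_pt Eij_pt vector_uminus_component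
    by (cases "k = i"; cases "l = j"; cases "k = j"; cases "l = i"; simp)
  then show ?thesis by (simp add: vec_eq_iff)
qed

lemma trace_Eij: "trace (M ** transpose (Eij i j)) = M$i$j - M$j$i"
proof -
  have P: "M$k$l * Eij i j $ k $ l = (if k = i \<and> l = j then M$i$j else 0) - (if k = j \<and> l = i then M$j$i else 0)" for k l
    unfolding Eij_pt by (cases "k = i"; cases "l = j"; cases "k = j"; cases "l = i"; simp)
  have "trace (M ** transpose (Eij i j)) = (\<Sum>k\<in>UNIV. \<Sum>l\<in>UNIV. M$k$l * Eij i j $ k $ l)"
    by (simp add: trace_def matrix_matrix_mult_def transpose_def)
  also have "\<dots> = (\<Sum>k\<in>UNIV. \<Sum>l\<in>UNIV. (if k = i \<and> l = j then M$i$j else 0) - (if k = j \<and> l = i then M$j$i else 0))"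
    by (simp only: P)
  also have "\<dots> = M$i$j - M$j$i"
    by (simp only: sum_subtractf sum2_delta)
  finally show ?thesis .
qed

lemma inner_Eij: "w \<bullet> (Eij i j *v v) = w$i * v$j - w$j * v$i"
proof -
  have P: "w$k * (Eij i j $ k $ l * v$l) = (if k = i \<and> l = j then w$i * v$j else 0) - (if k = j \<and> l = i then w$j * v$i else 0)" for k l
    unfolding Eij_pt by (cases "k = i"; cases "l = j"; cases "k = j"; cases "l = i"; simp)
  have "w \<bullet> (Eij i j *v v) = (\<Sum>k\<in>UNIV. \<Sum>l\<in>UNIV. w$k * (Eij i j $ k $ l * v$l))"
    by (simp add: inner_vec_def matrix_vector_mult_def sum_distrib_left)
  also have "\<dots> = (\<Sum>k\<in>UNIV. \<Sum>l\<in>UNIV. (if k = i \<and> l = j then w$i * v$j else 0) - (if k = j \<and> l = i then w$j * v$i else 0))"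
    by (simp only: P)
  also have "\<dots> = w$i * v$j - w$j * v$i"
    by (simp only: sum_subtractf sum2_delta)
  finally show ?thesis .
qed


lemma nu_diff:
  fixes \<nu> :: "real^'n \<Rightarrow> real^'n"
  assumes "smooth_hypersurface S \<nu>" "x \<in> S"
  shows "\<nu> differentiable (at x)" "\<nu> x \<bullet> \<nu> x = 1"
proof -
  obtain \<phi> G where HH: "smooth_fun \<phi> \<and> S = {x. \<phi> x = 0} \<and>
        (\<forall>x. (\<phi> has_derivative (\<lambda>v. G x \<bullet> v)) (at x)) \<and>
        (\<forall>x\<in>S. G x \<noteq> 0) \<and> (\<forall>x. \<nu> x = G x /\<^sub>R norm (G x))"
    using assms(1)[unfolded smooth_hypersurface_def] by (elim exE) (rule that)
  have sm: "smooth_fun \<phi>" using HH by (rule conjunct1)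
  note HH2 = HH[THEN conjunct2, THEN conjunct2]
  have der: "\<forall>x. (\<phi> has_derivative (\<lambda>v. G x \<bullet> v)) (at x)" using HH2 by (rule conjunct1)
  have nz: "\<forall>x\<in>S. G x \<noteq> 0" using HH2[THEN conjunct2] by (rule conjunct1)
  have nu: "\<forall>x. \<nu> x = G x /\<^sub>R norm (G x)" using HH2[THEN conjunct2] by (rule conjunct2)
  have comp: "(\<lambda>y. G y \<bullet> v) differentiable (at x)" for v
  proof -
    from sm have "iter_dd [v] \<phi> differentiable (at x)" unfolding smooth_fun_def by blast
    moreover have "iter_dd [v] \<phi> = (\<lambda>y. G y \<bullet> v)"
    proof
      fix y
      have "frechet_derivative \<phi> (at y) = (\<lambda>v. G y \<bullet> v)"
        using frechet_derivative_at[OF der[rule_format, of y]] by simp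
      then show "iter_dd [v] \<phi> y = G y \<bullet> v" by simp
    qed
    ultimately show ?thesis by simp
  qed
  have Geq: "G = (\<lambda>y. \<Sum>b\<in>Basis. (G y \<bullet> b) *\<^sub>R b)" by (rule ext, rule euclidean_representation[symmetric])
  have G: "G differentiable (at x)"
    by (subst Geq) (intro differentiable_sum differentiable_scaleR comp differentiable_const ballI finite_Basis)
  have Gx: "G x \<noteq> 0" using nz assms(2) by blast
  have nG: "(\<lambda>y. norm (G y)) differentiable (at x)"
    using differentiable_chain_at[OF G differentiable_norm_at[OF Gx]] by (simp add: o_def)
  have "(\<lambda>y. inverse (norm (G y)) *\<^sub>R G y) differentiable (at x)"
    by (rule differentiable_scaleR[OF differentiable_inverse[OF nG] G]) (use Gx in simp)
  moreover have "\<nu> = (\<lambda>y. inverse (norm (G y)) *\<^sub>R G y)" using nu by (simp add: fun_eq_iff)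
  ultimately show "\<nu> differentiable (at x)" by simp
  have "norm (\<nu> x) = 1" unfolding nu[rule_format] using Gx by (simp add: norm_scaleR)
  then show "\<nu> x \<bullet> \<nu> x = 1" by (metis power2_norm_eq_inner power_one)
qed

lemma mv_scaleR_left: "(c *\<^sub>R (M::real^'n^'m)) *v x = c *\<^sub>R (M *v x)"
  by (simp add: vec_eq_iff matrix_vector_mult_def sum_distrib_left algebra_simps)

lemma mv_neg: "(M::real^'n^'m) *v (- x) = - (M *v x)"
  by (simp add: vec_eq_iff matrix_vector_mult_def sum_negf)

lemma bb_mv: "bounded_bilinear (\<lambda>(M::real^'n^'m) (x::real^'n). M *v x)"
proof -
  have "bilinear (\<lambda>(M::real^'n^'m) (x::real^'n). M *v x)"
    unfolding bilinear_def
    by (auto intro!: linearI simp: matrix_vector_mult_add_rdistrib mv_scaleR_left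
        matrix_vector_right_distrib matrix_vector_mult_scaleR)
  then show ?thesis by (simp add: bilinear_conv_bounded_bilinear)
qed

lemma wedge_alg:
  fixes U' :: "real^'n^'n" and W X \<nu> :: "real^'n"
  assumes nn: "\<nu> \<bullet> \<nu> = 1" and r: "r > 0" and \<gamma>: "\<gamma> > 0"
    and U': "U' = (1 / (r * \<gamma>\<^sup>2)) *\<^sub>R wedge W \<nu>"
    and W: "W = r *\<^sub>R (U' *v \<nu>) + X + c *\<^sub>R \<nu>"
  shows "U' = (1 / ((1 + \<gamma>\<^sup>2) * r)) *\<^sub>R wedge X \<nu>"
proof -
  define k where "k = 1 / (r * \<gamma>\<^sup>2)"
  define Wd where "Wd = wedge W \<nu>"
  have U'k: "U' = k *\<^sub>R Wd" using U' by (simp add: k_def Wd_def)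
  have "U' *v \<nu> = k *\<^sub>R ((W \<bullet> \<nu>) *\<^sub>R \<nu> - W)"
    using U'k by (simp add: mv_scaleR_left Wd_def wedge_mv nn)
  then have wU: "wedge (U' *v \<nu>) \<nu> = - k *\<^sub>R Wd"
    by (simp add: wedge_scale wedge_diff wedge_self Wd_def)
  have "Wd = r *\<^sub>R wedge (U' *v \<nu>) \<nu> + wedge X \<nu> + c *\<^sub>R wedge \<nu> \<nu>"
    unfolding Wd_def by (subst W) (simp add: wedge_add wedge_scale)
  then have "Wd = (- (r * k)) *\<^sub>R Wd + wedge X \<nu>" using wU by (simp add: wedge_self)
  then have eq: "(1 + r * k) *\<^sub>R Wd = wedge X \<nu>" by (simp add: algebra_simps)
  have pos: "1 + r * k > 0" using r \<gamma> by (simp add: k_def add_pos_pos)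
  have "Wd = (1 / (1 + r * k)) *\<^sub>R ((1 + r * k) *\<^sub>R Wd)" using pos by simp
  then have "Wd = (1 / (1 + r * k)) *\<^sub>R wedge X \<nu>" unfolding eq .
  then have "U' = (k / (1 + r * k)) *\<^sub>R wedge X \<nu>" using U'k by simp
  moreover have "k / (1 + r * k) = 1 / ((1 + \<gamma>\<^sup>2) * r)"
    using r \<gamma> by (simp add: k_def field_simps)
  ultimately show ?thesis by simp
qed

theorem proposition4p1:
  fixes S :: "(real^'n) set" and \<nu> :: "real^'n \<Rightarrow> real^'n" and e :: "real^'n"
    and m r \<gamma> g :: real and I :: "real set"
    and A A' U' :: "real \<Rightarrow> real^'n^'n" and a a' a'' :: "real \<Rightarrow> real^'n"
  defines "U \<equiv> (\<lambda>t. A' t ** matrix_inv (A t))"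
  assumes cyl: "cylinder_hypersurface S \<nu> e"
    and m_pos: "m > 0" and r_pos: "r > 0" and \<gamma>_pos: "\<gamma> > 0"
    and I_open: "open I"
    and A_SO: "\<forall>t\<in>I. A t \<in> SOn"
    and a_S: "\<forall>t\<in>I. a t \<in> S"
    and A_deriv: "\<forall>t\<in>I. (A has_vector_derivative A' t) (at t)"
    and U_deriv: "\<forall>t\<in>I. (U has_vector_derivative U' t) (at t)"
    and a_deriv: "\<forall>t\<in>I. (a has_vector_derivative a' t) (at t)"
    and a'_deriv: "\<forall>t\<in>I. (a' has_vector_derivative a'' t) (at t)"
    and no_slip: "\<forall>t\<in>I. (A' t, a' t) \<in> noslip r \<nu> (A t) (a t)"
    and newton: "\<forall>t\<in>I. \<exists>N \<in> noslip_perp m r \<gamma> \<nu> (A t) (a t).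
                   (U' t ** A t, cov_S \<nu> (a t) (a'' t))
                     = (1 / m) *\<^sub>R (0, - (m * g) *\<^sub>R e) + N"
  shows "\<forall>t\<in>I.
           a' t = r *\<^sub>R (U t *v \<nu> (a t))
         \<and> A' t = U t ** A t
         \<and> U' t = - (1 / ((1 + \<gamma>\<^sup>2) * r)) *\<^sub>R
              wedge (r\<^sup>2 *\<^sub>R (U t *v shape_op \<nu> (a t) (U t *v \<nu> (a t))) - g *\<^sub>R e) (\<nu> (a t))"
proof
  fix t assume t: "t \<in> I"
  have hyp: "smooth_hypersurface S \<nu>" using cyl by (simp add: cylinder_hypersurface_def)
  have ASO: "A t \<in> SOn" using bspec[OF A_SO t] .
  note inv = SOn_inv[OF ASO]
  have aS: "a t \<in> S" using bspec[OF a_S t] .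
  have ns: "a' s = r *\<^sub>R (U s *v \<nu> (a s))" if "s \<in> I" for s
    using no_slip that by (auto simp: noslip_def U_def)
  show "a' t = r *\<^sub>R (U t *v \<nu> (a t))
         \<and> A' t = U t ** A t
         \<and> U' t = - (1 / ((1 + \<gamma>\<^sup>2) * r)) *\<^sub>R
              wedge (r\<^sup>2 *\<^sub>R (U t *v shape_op \<nu> (a t) (U t *v \<nu> (a t))) - g *\<^sub>R e) (\<nu> (a t))"
  proof (intro conjI)
    show c1: "a' t = r *\<^sub>R (U t *v \<nu> (a t))" by (rule ns[OF t])
    show "A' t = U t ** A t" by (simp add: U_def matrix_mul_assoc[symmetric] inv(2))
    have diff: "\<nu> differentiable (at (a t))" and nn: "\<nu> (a t) \<bullet> \<nu> (a t) = 1"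
      using nu_diff[OF hyp aS] by auto
    define D where "D = frechet_derivative \<nu> (at (a t))"
    have Dd: "(\<nu> has_derivative D) (at (a t))" using diff unfolding D_def frechet_derivative_works .
    have lD: "linear D" using has_derivative_linear[OF Dd] .
    have ad: "(a has_derivative (\<lambda>h. h *\<^sub>R a' t)) (at t)"
      using a_deriv t by (simp add: has_vector_derivative_def)
    have "((\<nu> \<circ> a) has_derivative (D \<circ> (\<lambda>h. h *\<^sub>R a' t))) (at t)"
      by (rule diff_chain_at[OF ad Dd])
    moreover have "D \<circ> (\<lambda>h. h *\<^sub>R a' t) = (\<lambda>h. h *\<^sub>R D (a' t))"
      using lD by (simp add: fun_eq_iff linear_scale)
    ultimately have nuad: "((\<lambda>s. \<nu> (a s)) has_vector_derivative D (a' t)) (at t)"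
      by (simp add: has_vector_derivative_def o_def)
    have Ud: "(U has_vector_derivative U' t) (at t)" using bspec[OF U_deriv t] .
    have prod: "((\<lambda>s. U s *v \<nu> (a s)) has_vector_derivative (U t *v D (a' t) + U' t *v \<nu> (a t))) (at t)"
      using bounded_bilinear.has_vector_derivative[OF bb_mv Ud nuad] by simp
    have "((\<lambda>s. r *\<^sub>R (U s *v \<nu> (a s))) has_vector_derivative r *\<^sub>R (U t *v D (a' t) + U' t *v \<nu> (a t))) (at t)"
      by (rule bounded_linear.has_vector_derivative[OF bounded_linear_scaleR_right prod])
    then have "(a' has_vector_derivative r *\<^sub>R (U t *v D (a' t) + U' t *v \<nu> (a t))) (at t)"
      by (rule has_vector_derivative_transform_within_open[OF _ I_open t]) (simp add: ns)
    then have a''eq: "a'' t = r *\<^sub>R (U t *v D (a' t) + U' t *v \<nu> (a t))"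
      by (rule vector_derivative_unique_at[OF bspec[OF a'_deriv t]])
    define Y where "Y = U t *v shape_op \<nu> (a t) (U t *v \<nu> (a t))"
    have "D (a' t) = - (r *\<^sub>R shape_op \<nu> (a t) (U t *v \<nu> (a t)))"
      unfolding c1 using lD by (simp add: shape_op_def D_def linear_scale)
    then have "U t *v D (a' t) = - (r *\<^sub>R Y)"
      by (simp add: Y_def matrix_vector_mult_scaleR mv_neg)
    then have a''2: "a'' t = r *\<^sub>R (U' t *v \<nu> (a t)) - r\<^sup>2 *\<^sub>R Y"
      using a''eq by (simp add: algebra_simps power2_eq_square)
    obtain N where N: "N \<in> noslip_perp m r \<gamma> \<nu> (A t) (a t)"
      and Neq: "(U' t ** A t, cov_S \<nu> (a t) (a'' t)) = (1 / m) *\<^sub>R (0, - (m * g) *\<^sub>R e) + N"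
      using bspec[OF newton t] apply (elim bexE) apply (rule that) apply assumption+ done
    define W where "W = cov_S \<nu> (a t) (a'' t) + g *\<^sub>R e"
    have NN: "N = (U' t ** A t, W)"
      using Neq m_pos by (auto simp: W_def prod_eq_iff)
    have U'son: "transpose (U' t) = - U' t"
    proof -
      have "N \<in> tangent_M \<nu> (A t) (a t)" using N unfolding noslip_perp_def by blast
      then have "(U' t ** A t) ** matrix_inv (A t) \<in> son" by (simp add: NN tangent_M_def)
      then show ?thesis using inv(1) by (simp add: son_def matrix_mul_assoc[symmetric])
    qed
    have orth: "kin_metric m r \<gamma> (A t) N z = 0" if "z \<in> noslip r \<nu> (A t) (a t)" for z
      using N that by (auto simp: noslip_perp_def)
    have comp: "(r * \<gamma>)\<^sup>2 * U' t $ i $ j = r * (W $ j * \<nu> (a t) $ i - W $ i * \<nu> (a t) $ j)" for i j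
    proof -
      define E where "E = Eij i j"
      have Eskew: "transpose E = - E" by (simp add: E_def Eij_skew)
      have EA: "(E ** A t) ** matrix_inv (A t) = E" by (simp add: matrix_mul_assoc[symmetric] inv(1))
      have U'A: "(U' t ** A t) ** matrix_inv (A t) = U' t" by (simp add: matrix_mul_assoc[symmetric] inv(1))
      have "(r *\<^sub>R (E *v \<nu> (a t))) \<bullet> \<nu> (a t) = 0"
        using skew_quad[OF Eskew, of "\<nu> (a t)"] by (simp add: inner_commute)
      then have "(E ** A t, r *\<^sub>R (E *v \<nu> (a t))) \<in> noslip r \<nu> (A t) (a t)"
        using Eskew by (simp add: noslip_def tangent_M_def tangent_S_def son_def EA)
      from orth[OF this]
      have "m * ((r * \<gamma>)\<^sup>2 / 2 * (U' t $ i $ j - U' t $ j $ i) + r * (W $ i * \<nu> (a t) $ j - W $ j * \<nu> (a t) $ i)) = 0"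
        by (simp add: kin_metric_def NN EA[unfolded E_def] U'A E_def trace_Eij inner_Eij)
      moreover have "U' t $ j $ i = - U' t $ i $ j"
        using arg_cong[OF U'son, of "\<lambda>M. M $ i $ j"] by (simp add: transpose_pt)
      ultimately have "(r * \<gamma>)\<^sup>2 / 2 * (U' t $ i $ j - U' t $ j $ i) + r * (W $ i * \<nu> (a t) $ j - W $ j * \<nu> (a t) $ i) = 0"
        and U'ji: "U' t $ j $ i = - U' t $ i $ j" using m_pos by auto
      moreover have "(r * \<gamma>)\<^sup>2 / 2 * (U' t $ i $ j - U' t $ j $ i) = (r * \<gamma>)\<^sup>2 * U' t $ i $ j"
        unfolding U'ji by simp
      ultimately show ?thesis by (simp add: algebra_simps)
    qed
    have U'eq: "U' t = (1 / (r * \<gamma>\<^sup>2)) *\<^sub>R wedge W (\<nu> (a t))"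
    proof (subst vec_eq_iff, intro allI, subst vec_eq_iff, intro allI)
      fix i j
      have h: "(r * \<gamma>)\<^sup>2 \<noteq> 0" using r_pos \<gamma>_pos by simp
      have "U' t $ i $ j = r * (W $ j * \<nu> (a t) $ i - W $ i * \<nu> (a t) $ j) / (r * \<gamma>)\<^sup>2"
        using comp[of i j] h by (simp add: eq_divide_eq mult.commute)
      also have "\<dots> = (1 / (r * \<gamma>\<^sup>2)) * (\<nu> (a t) $ i * W $ j - W $ i * \<nu> (a t) $ j)"
        using r_pos \<gamma>_pos by (simp add: power2_eq_square field_simps)
      also have "\<dots> = ((1 / (r * \<gamma>\<^sup>2)) *\<^sub>R wedge W (\<nu> (a t))) $ i $ j"
        by (simp add: wedge_def)
      finally show "U' t $ i $ j = ((1 / (r * \<gamma>\<^sup>2)) *\<^sub>R wedge W (\<nu> (a t))) $ i $ j" .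
    qed
    have Weq: "W = r *\<^sub>R (U' t *v \<nu> (a t)) + (g *\<^sub>R e - r\<^sup>2 *\<^sub>R Y) + (- (a'' t \<bullet> \<nu> (a t))) *\<^sub>R \<nu> (a t)"
      by (simp add: W_def cov_S_def a''2 algebra_simps)
    have "U' t = (1 / ((1 + \<gamma>\<^sup>2) * r)) *\<^sub>R wedge (g *\<^sub>R e - r\<^sup>2 *\<^sub>R Y) (\<nu> (a t))"
      by (rule wedge_alg[OF nn r_pos \<gamma>_pos U'eq Weq])
    then show "U' t = - (1 / ((1 + \<gamma>\<^sup>2) * r)) *\<^sub>R
              wedge (r\<^sup>2 *\<^sub>R (U t *v shape_op \<nu> (a t) (U t *v \<nu> (a t))) - g *\<^sub>R e) (\<nu> (a t))"
      by (simp add: Y_def[symmetric] wedge_diff wedge_scale algebra_simps)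
  qed
qed

end
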